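(* Let $t \ge 0$ and consider the three-taxon multispecies coalescent described in the context, with species tree $S$ of topology $AB|C$ and internal branch length $t$. Let $G_1,\dots,G_L$ be the gene trees (topologies and exact coalescence times) of $L$ independent loci. Let $\mathbb{P}_L$ denote the probability that the GLASS/Maximum-Tree method (equivalently, maximum likelihood under the multispecies coalescent) applied to $G_1,\dots,G_L$ fails to output the topology $AB|C$. Then the limit $\alpha_{\mathrm{ML}}(t) = -\lim_{L\to\infty}\frac{1}{L}\ln \mathbb{P}_L$ exists and $$\alpha_{\mathrm{ML}}(t) = t.$$
   Context: Multispecies coalescent, three-taxon case: $S$ is an ultrametric rooted species tree on three species $A,B,C$ with topology $AB|C$, all (haploid) populations of equal size $N$, time measured in units of $N$ generations backwards from the present. Populations are $A,B,C$ (extant), $AB$ (ancestor of $A$ and $B$, from divergence time $\tau_{AB}$ to $\tau_{ABC}$) and $ABC$ (root population, from $\tau_{ABC}$ to $\infty$), with $\tau_{AB}\le\tau_{ABC}$; the internal branch length is $t=\tau_{ABC}-\tau_{AB}$. For each locus one lineage is sampled from each of $A,B,C$ at time $0$; going backwards in time, within each population every pair of lineages present in that population coalesces independently at rate $1$, and lineages entering an ancestral population merge into it. Loci are independent (unlinked). In particular the lineages from $A$ and $B$ fail to coalesce in population $AB$ with probability $e^{-t}$, in which case the three gene-tree topologies are equally likely. Gene trees are assumed known exactly, including coalescence times. GLASS/Maximum Tree: for each pair of species $X,Y$, compute the minimum over loci of the coalescence time of the lineages from $X$ and $Y$ in $G_\ell$; the output topology groups together the pair with the smallest such minimum. Under this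 model this method coincides with maximum likelihood estimation of the species tree from the gene trees. *)

theory Defs
  imports "HOL-Probability.Probability"
begin

definition exp_M :: "real \<Rightarrow> real measure" where
  "exp_M r = density lborel (exponential_density r)"

definition unif01 :: "real measure" where
  "unif01 = uniform_measure lborel {0..1}"

text \<open>Underlying randomness of one locus:
  x ~ Exp(1): waiting time of the A,B lineages in population AB;
  y ~ Exp(1): waiting time of the (AB) and C lineages in ABC (if A,B coalesced in AB);
  w ~ Exp(3): waiting time of the first coalescence among three lineages in ABC;
  v ~ Exp(1): subsequent waiting time for the last coalescence;
  u ~ U[0,1]: chooses uniformly which of the three pairs coalesces first.\<close>
definition locus_space :: "(real \<times> real \<times> real \<times> real \<times> real) measure" where
  "locus_space = exp_M 1 \<Otimes>\<^sub>M (exp_M 1 \<Otimes>\<^sub>M (exp_M 3 \<Otimes>\<^sub>M (exp_M 1 \<Otimes>\<^sub>M unif01)))"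

text \<open>A gene tree is encoded by the pairwise coalescence times (T_AB, T_AC, T_BC)
  (times measured from the present); its topology is determined by these
  (the cherry is the pair with the smallest coalescence time).
  tAB is the divergence time of A and B, t the internal branch length.\<close>
definition gene_tree ::
  "real \<Rightarrow> real \<Rightarrow> real \<times> real \<times> real \<times> real \<times> real \<Rightarrow> real \<times> real \<times> real" where
  "gene_tree tAB t \<omega> = (case \<omega> of (x, y, w, v, u) \<Rightarrow>
     if x < t then (tAB + x, tAB + t + y, tAB + t + y)
     else (let r = tAB + t + w in
           if u < 1/3 then (r, r + v, r + v)
           else if u < 2/3 then (r + v, r, r + v)
           else (r + v, r + v, r)))"

definition locus_measure :: "real \<Rightarrow> real \<Rightarrow> (real \<times> real \<times> real) measure" where
  "locus_measure tAB t = distr locus_space borel (gene_tree tAB t)"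

definition loci_measure :: "real \<Rightarrow> real \<Rightarrow> nat \<Rightarrow> (nat \<Rightarrow> real \<times> real \<times> real) measure" where
  "loci_measure tAB t L = PiM {..<L} (\<lambda>_. locus_measure tAB t)"

text \<open>GLASS / Maximum Tree fails to output AB|C: the minimum over loci of the
  AB coalescence time is not strictly smaller than both other minima.\<close>
definition glass_fails :: "nat \<Rightarrow> (nat \<Rightarrow> real \<times> real \<times> real) \<Rightarrow> bool" where
  "glass_fails L g \<longleftrightarrow>
     (let mAB = Min ((\<lambda>l. fst (g l)) ` {..<L});
          mAC = Min ((\<lambda>l. fst (snd (g l))) ` {..<L});
          mBC = Min ((\<lambda>l. snd (snd (g l))) ` {..<L})
      in \<not> (mAB < mAC \<and> mAB < mBC))"

definition fail_prob :: "real \<Rightarrow> real \<Rightarrow> nat \<Rightarrow> real" where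
  "fail_prob tAB t L =
     measure (loci_measure tAB t L) {g \<in> space (loci_measure tAB t L). glass_fails L g}"

end

theory Submission
  imports Defs
begin


lemma exp_prob: "0 < r \<Longrightarrow> prob_space (exp_M r)"
  unfolding exp_M_def by (rule prob_space_exponential_density)

lemma sets_exp[measurable_cong]: "sets (exp_M r) = sets borel"
  unfolding exp_M_def by simp

lemma space_exp[simp]: "space (exp_M r) = UNIV"
  unfolding exp_M_def by simp

lemma sets_unif[measurable_cong]: "sets unif01 = sets borel"
  unfolding unif01_def by simp

lemma unif_prob: "prob_space unif01"
  unfolding unif01_def by (rule prob_space_uniform_measure) auto

lemma exp_distr: "0 < r \<Longrightarrow> distributed (exp_M r) lborel (\<lambda>x. x) (exponential_density r)"
  unfolding distributed_def exp_M_def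
  by (auto simp: exponential_density_nonneg intro!: distr_id2)

lemma exp_gt: assumes "0 < r" "0 \<le> a" shows "measure (exp_M r) {a<..} = exp (- a * r)"
proof -
  interpret prob_space "exp_M r" using exp_prob assms by auto
  have "\<P>(x in exp_M r. a < x) = exp (- a * r)"
    by (rule exponential_distributedD_gt[OF exp_distr]) (use assms in auto)
  moreover have "{x \<in> space (exp_M r). a < x} = {a<..}" by auto
  ultimately show ?thesis by simp
qed

lemma exp_le: assumes "0 < r" "0 \<le> a" shows "measure (exp_M r) {..a} = 1 - exp (- a * r)"
proof -
  interpret prob_space "exp_M r" using exp_prob assms by auto
  have "\<P>(x in exp_M r. x \<le> a) = 1 - exp (- a * r)"
    by (rule exponential_distributedD_le[OF exp_distr]) (use assms in auto)
  moreover have "{x \<in> space (exp_M r). x \<le> a} = {..a}" by auto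
  ultimately show ?thesis by simp
qed

lemma exp_single: "measure (exp_M r) {a} = 0"
proof -
  have "AE x in lborel. x \<in> {a} \<longrightarrow> ennreal (exponential_density r x) = 0"
    by (rule eventually_mono[OF AE_lborel_singleton[of a]]) simp
  then have "{a} \<in> null_sets (exp_M r)"
    unfolding exp_M_def by (subst null_sets_density_iff) simp_all
  then show ?thesis by (simp add: measure_def null_setsD1)
qed

lemma exp_neg: assumes "0 < r" shows "measure (exp_M r) {..<0} = 0"
proof -
  interpret prob_space "exp_M r" using exp_prob assms by auto
  have "measure (exp_M r) {..<0} \<le> measure (exp_M r) {..0}"
    by (rule finite_measure_mono) auto
  also have "\<dots> = 0" using exp_le[OF assms, of 0] by simp
  finally show ?thesis by (simp add: measure_le_0_iff)
qed

lemma exp_nonneg: assumes "0 < r" shows "measure (exp_M r) {0..} = 1"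
proof -
  interpret prob_space "exp_M r" using exp_prob assms by auto
  have "{0::real..} = space (exp_M r) - {..<0}" by auto
  then show ?thesis using exp_neg[OF assms] prob_compl[of "{..<0}"] by auto
qed

lemma exp_ge: assumes "0 < r" "0 \<le> a" shows "measure (exp_M r) {a..} \<le> exp (- a * r)"
proof -
  interpret prob_space "exp_M r" using exp_prob assms by auto
  have "measure (exp_M r) {a..} \<le> measure (exp_M r) {a<..} + measure (exp_M r) {a}"
    by (rule order_trans[OF _ measure_Un_le[of "{a<..}" _ "{a}"]]) (auto intro!: finite_measure_mono)
  then show ?thesis using exp_gt[OF assms] exp_single[of r a] by simp
qed

lemma unif_mid: "measure unif01 {1/3..<2/3} = 1/3"
proof -
  have "{0..1} \<inter> {1/3..<2/3} = {1/3..<2/3::real}" by auto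
  moreover have "ennreal (1/3) / 1 = ennreal (1/3)"
    by (simp add: divide_ennreal_def)
  ultimately show ?thesis unfolding unif01_def measure_def by simp
qed

lemma prob_loc: "prob_space locus_space"
  unfolding locus_space_def
  by (intro prob_space_pair exp_prob unif_prob) auto

lemma sets_loc: "sets locus_space = sets (borel \<Otimes>\<^sub>M (borel \<Otimes>\<^sub>M (borel \<Otimes>\<^sub>M (borel \<Otimes>\<^sub>M borel))))"
  unfolding locus_space_def
  by (intro sets_pair_measure_cong) (auto simp: sets_exp sets_unif)

lemma loc_times:
  assumes [measurable]: "A \<in> sets borel" "B \<in> sets borel" "C \<in> sets borel" "D \<in> sets borel" "E \<in> sets borel"
  shows "measure locus_space (A \<times> B \<times> C \<times> D \<times> E) =
    measure (exp_M 1) A * measure (exp_M 1) B * measure (exp_M 3) C * measure (exp_M 1) D * measure unif01 E"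
proof -
  have p1: "prob_space (exp_M 1)" "prob_space (exp_M 3)" using exp_prob by auto
  note pp = prob_space_pair prob_space_imp_sigma_finite unif_prob p1
  have "emeasure locus_space (A \<times> B \<times> C \<times> D \<times> E) =
    emeasure (exp_M 1) A * (emeasure (exp_M 1) B * (emeasure (exp_M 3) C * (emeasure (exp_M 1) D * emeasure unif01 E)))"
    unfolding locus_space_def
    apply (subst sigma_finite_measure.emeasure_pair_measure_Times, (auto intro!: pp)[3])
    apply (subst sigma_finite_measure.emeasure_pair_measure_Times, (auto intro!: pp)[3])
    apply (subst sigma_finite_measure.emeasure_pair_measure_Times, (auto intro!: pp)[3])
    apply (subst sigma_finite_measure.emeasure_pair_measure_Times, (auto intro!: pp)[3])
    apply simp
    done
  then show ?thesis by (simp add: measure_def enn2real_mult mult.assoc)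
qed

lemma gene_meas: "gene_tree tAB t \<in> borel_measurable locus_space"
proof -
  have "gene_tree tAB t = (\<lambda>\<omega>. (if fst \<omega> < t then tAB + fst \<omega> else
        if snd (snd (snd (snd \<omega>))) < 1/3 then tAB + t + fst (snd (snd \<omega>)) else tAB + t + fst (snd (snd \<omega>)) + fst (snd (snd (snd \<omega>))),
        (if fst \<omega> < t then tAB + t + fst (snd \<omega>) else
        if snd (snd (snd (snd \<omega>))) < 1/3 then tAB + t + fst (snd (snd \<omega>)) + fst (snd (snd (snd \<omega>))) else if snd (snd (snd (snd \<omega>))) < 2/3 then tAB + t + fst (snd (snd \<omega>))
        else tAB + t + fst (snd (snd \<omega>)) + fst (snd (snd (snd \<omega>)))),
        (if fst \<omega> < t then tAB + t + fst (snd \<omega>) else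
        if snd (snd (snd (snd \<omega>))) < 2/3 then tAB + t + fst (snd (snd \<omega>)) + fst (snd (snd (snd \<omega>)))
        else tAB + t + fst (snd (snd \<omega>)))))"
    by (auto simp: gene_tree_def Let_def fun_eq_iff split: prod.splits)
  then show ?thesis unfolding locus_space_def by simp
qed



lemma fst_bm[measurable]: "(\<lambda>p. fst p) \<in> borel_measurable (borel :: ('a::{second_countable_topology} \<times> 'b::{second_countable_topology}) measure)"
  by (intro borel_measurable_continuous_onI continuous_intros)

lemma snd_bm[measurable]: "(\<lambda>p. snd p) \<in> borel_measurable (borel :: ('a::{second_countable_topology} \<times> 'b::{second_countable_topology}) measure)"
  by (intro borel_measurable_continuous_onI continuous_intros)

lemma space_loc[simp]: "space locus_space = UNIV"
  unfolding locus_space_def by (simp add: space_pair_measure unif01_def)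

lemma prob_locm: "prob_space (locus_measure tAB t)"
  unfolding locus_measure_def
  by (intro prob_space.prob_space_distr prob_loc gene_meas)

lemma sets_locm[measurable_cong]: "sets (locus_measure tAB t) = sets borel"
  unfolding locus_measure_def by simp

lemma locm_eq: "B \<in> sets borel \<Longrightarrow> measure (locus_measure tAB t) B = measure locus_space (gene_tree tAB t -` B)"
  unfolding locus_measure_def by (subst measure_distr) (auto intro: gene_meas)

lemma rect_sets:
  assumes "A \<in> sets borel" "B \<in> sets borel" "C \<in> sets borel" "D \<in> sets borel" "E \<in> sets borel"
  shows "A \<times> B \<times> C \<times> D \<times> E \<in> sets locus_space"
  unfolding sets_loc using assms by (intro pair_measureI) auto

lemma locm_B1:
  assumes "0 \<le> t"
  shows "measure (locus_measure tAB t) {p. tAB + t \<le> fst p} \<le> exp (- t)"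
proof -
  interpret prob_space locus_space by (rule prob_loc)
  have m: "{p::real\<times>real\<times>real. tAB + t \<le> fst p} \<in> sets borel" by measurable
  have "gene_tree tAB t -` {p. tAB + t \<le> fst p} \<subseteq> {t..} \<times> UNIV \<times> UNIV \<times> UNIV \<times> UNIV"
    by (auto simp: gene_tree_def Let_def split: if_splits)
  then have "measure locus_space (gene_tree tAB t -` {p. tAB + t \<le> fst p}) \<le> measure locus_space ({t..} \<times> UNIV \<times> UNIV \<times> UNIV \<times> UNIV)"
    by (rule finite_measure_mono[OF _ rect_sets]) auto
  also have "\<dots> = measure (exp_M 1) {t..}"
    using prob_space.prob_space[OF exp_prob] prob_space.prob_space[OF unif_prob]
    by (subst loc_times) (auto simp: unif01_def)
  also have "\<dots> \<le> exp (- t)" using exp_ge[of 1 t] assms by simp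
  finally show ?thesis using locm_eq[OF m] by simp
qed

lemma locm_B2:
  shows "measure (locus_measure tAB t) {p. fst (snd p) < tAB + t \<or> snd (snd p) < tAB + t} = 0"
proof -
  interpret prob_space locus_space by (rule prob_loc)
  have m: "{p::real\<times>real\<times>real. fst (snd p) < tAB + t \<or> snd (snd p) < tAB + t} \<in> sets borel" by measurable
  let ?S1 = "(UNIV::real set) \<times> {..<0::real} \<times> (UNIV::real set) \<times> (UNIV::real set) \<times> (UNIV::real set)"
  let ?S2 = "(UNIV::real set) \<times> (UNIV::real set) \<times> {..<0::real} \<times> (UNIV::real set) \<times> (UNIV::real set)"
  let ?S3 = "(UNIV::real set) \<times> (UNIV::real set) \<times> (UNIV::real set) \<times> {..<0::real} \<times> (UNIV::real set)"
  have s1: "?S1 \<in> sets locus_space" "?S2 \<in> sets locus_space" "?S3 \<in> sets locus_space"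
    by (rule rect_sets; simp)+
  have z: "measure locus_space ?S1 = 0" "measure locus_space ?S2 = 0" "measure locus_space ?S3 = 0"
    by (subst loc_times; simp add: exp_neg)+
  have "gene_tree tAB t -` {p. fst (snd p) < tAB + t \<or> snd (snd p) < tAB + t} \<subseteq> ?S1 \<union> ?S2 \<union> ?S3"
    by (auto simp: gene_tree_def Let_def split: if_splits)
  then have "measure locus_space (gene_tree tAB t -` {p. fst (snd p) < tAB + t \<or> snd (snd p) < tAB + t}) \<le> measure locus_space (?S1 \<union> ?S2 \<union> ?S3)"
    using s1 by (intro finite_measure_mono) auto
  also have "\<dots> \<le> measure locus_space (?S1 \<union> ?S2) + measure locus_space ?S3"
    using s1 by (intro measure_Un_le) auto
  also have "\<dots> \<le> measure locus_space ?S1 + measure locus_space ?S2 + measure locus_space ?S3"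
    using s1 measure_Un_le[of ?S1 locus_space ?S2] by simp
  finally show ?thesis using locm_eq[OF m] z by (simp add: measure_le_0_iff)
qed

lemma locm_C0:
  assumes "0 \<le> t" "0 \<le> a"
  shows "exp (- t) * (1 - exp (- a * 3)) / 3 \<le> measure (locus_measure tAB t) {p. fst (snd p) \<le> tAB + t + a \<and> fst (snd p) \<le> fst p}"
proof -
  interpret prob_space locus_space by (rule prob_loc)
  have m: "{p::real\<times>real\<times>real. fst (snd p) \<le> tAB + t + a \<and> fst (snd p) \<le> fst p} \<in> sets borel" by measurable
  let ?S = "{t<..} \<times> (UNIV::real set) \<times> {..a} \<times> {0..} \<times> {1/3..<2/3::real}"
  have "?S \<subseteq> gene_tree tAB t -` {p. fst (snd p) \<le> tAB + t + a \<and> fst (snd p) \<le> fst p}"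
    by (auto simp: gene_tree_def Let_def)
  then have "measure locus_space ?S \<le> measure locus_space (gene_tree tAB t -` {p. fst (snd p) \<le> tAB + t + a \<and> fst (snd p) \<le> fst p})"
    using measurable_sets[OF gene_meas[of tAB t] m] by (intro finite_measure_mono) auto
  moreover have "measure locus_space ?S = exp (- t) * (1 - exp (- a * 3)) / 3"
    using prob_space.prob_space[OF exp_prob]
    by (subst loc_times) (auto simp: exp_gt exp_le exp_nonneg unif_mid assms)
  ultimately show ?thesis using locm_eq[OF m] by simp
qed

lemma locm_C1:
  assumes "0 \<le> t" "0 \<le> a"
  shows "exp (- t) * exp (- a * 3) \<le> measure (locus_measure tAB t) {p. tAB + t + a \<le> fst p}"
proof -
  interpret prob_space locus_space by (rule prob_loc)
  have m: "{p::real\<times>real\<times>real. tAB + t + a \<le> fst p} \<in> sets borel" by measurable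
  let ?S = "{t<..} \<times> (UNIV::real set) \<times> {a<..} \<times> {0..} \<times> (UNIV::real set)"
  have "?S \<subseteq> gene_tree tAB t -` {p. tAB + t + a \<le> fst p}"
    by (auto simp: gene_tree_def Let_def)
  then have "measure locus_space ?S \<le> measure locus_space (gene_tree tAB t -` {p. tAB + t + a \<le> fst p})"
    using measurable_sets[OF gene_meas[of tAB t] m] by (intro finite_measure_mono) auto
  moreover have "measure locus_space ?S = exp (- t) * exp (- a * 3)"
    using prob_space.prob_space[OF exp_prob] prob_space.prob_space[OF unif_prob]
    by (subst loc_times) (auto simp: exp_gt exp_le exp_nonneg unif01_def assms)
  ultimately show ?thesis using locm_eq[OF m] by simp
qed




lemma gf_char:
  assumes "0 < L"
  shows "glass_fails L g \<longleftrightarrow> \<not> (\<exists>l<L. \<forall>l'<L. fst (g l) < fst (snd (g l')) \<and> fst (g l) < snd (snd (g l')))"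
proof -
  let ?A = "(\<lambda>l. fst (g l)) ` {..<L}"
  let ?B = "(\<lambda>l. fst (snd (g l))) ` {..<L}"
  let ?C = "(\<lambda>l. snd (snd (g l))) ` {..<L}"
  have ne: "?A \<noteq> {}" "?B \<noteq> {}" "?C \<noteq> {}" "finite ?A" "finite ?B" "finite ?C" using assms by auto
  have "(Min ?A < Min ?B \<and> Min ?A < Min ?C) \<longleftrightarrow> (\<exists>l<L. \<forall>l'<L. fst (g l) < fst (snd (g l')) \<and> fst (g l) < snd (snd (g l')))"
  proof
    assume h: "Min ?A < Min ?B \<and> Min ?A < Min ?C"
    obtain l where l: "l < L" "Min ?A = fst (g l)" using Min_in[OF ne(4,1)] by auto
    show "\<exists>l<L. \<forall>l'<L. fst (g l) < fst (snd (g l')) \<and> fst (g l) < snd (snd (g l'))"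
    proof (intro exI[of _ l] conjI allI impI)
      fix l' assume "l' < L"
      then have "Min ?B \<le> fst (snd (g l'))" "Min ?C \<le> snd (snd (g l'))" using ne by (auto intro: Min_le)
      then show "fst (g l) < fst (snd (g l'))" "fst (g l) < snd (snd (g l'))" using h l by auto
    qed (use l in auto)
  next
    assume "\<exists>l<L. \<forall>l'<L. fst (g l) < fst (snd (g l')) \<and> fst (g l) < snd (snd (g l'))"
    then obtain l where l: "l < L" "\<forall>l'<L. fst (g l) < fst (snd (g l')) \<and> fst (g l) < snd (snd (g l'))" by auto
    have "Min ?A \<le> fst (g l)" using l ne by (auto intro: Min_le)
    moreover have "fst (g l) < Min ?B" "fst (g l) < Min ?C" using l ne by (auto simp: Min_gr_iff)
    ultimately show "Min ?A < Min ?B \<and> Min ?A < Min ?C" by auto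
  qed
  then show ?thesis unfolding glass_fails_def Let_def by simp
qed

lemma space_locim[simp]: "space (loci_measure tAB t L) = PiE {..<L} (\<lambda>_. UNIV)"
  unfolding loci_measure_def locus_measure_def by (simp add: space_PiM)

lemma fail_sets:
  assumes "0 < L"
  shows "{g \<in> space (loci_measure tAB t L). glass_fails L g} \<in> sets (loci_measure tAB t L)"
proof -
  have "{g \<in> space (loci_measure tAB t L). glass_fails L g} =
    {g \<in> space (loci_measure tAB t L). \<not> (\<exists>l\<in>{..<L}. \<forall>l'\<in>{..<L}. fst (g l) < fst (snd (g l')) \<and> fst (g l) < snd (snd (g l')))}"
    using gf_char[OF assms] by auto
  also have "\<dots> \<in> sets (loci_measure tAB t L)"
    unfolding loci_measure_def by measurable
  finally show ?thesis .
qed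

lemma fpps: "finite_product_prob_space (\<lambda>_. locus_measure tAB t) {..<L::nat}"
  unfolding finite_product_prob_space_def finite_product_sigma_finite_def product_sigma_finite_def
    product_prob_space_def finite_product_sigma_finite_axioms_def product_prob_space_axioms_def
  using prob_locm prob_space_imp_sigma_finite by auto




lemma fail_upper:
  assumes L: "0 < L" and t: "0 \<le> t"
  shows "fail_prob tAB t L \<le> exp (- t) ^ L"
proof -
  interpret P: finite_product_prob_space "\<lambda>_. locus_measure tAB t" "{..<L}" by (rule fpps)
  let ?M = "loci_measure tAB t L"
  have M: "?M = PiM {..<L} (\<lambda>_. locus_measure tAB t)" unfolding loci_measure_def ..
  define B1 where "B1 = {p::real\<times>real\<times>real. tAB + t \<le> fst p}"
  define B2 where "B2 = {p::real\<times>real\<times>real. fst (snd p) < tAB + t \<or> snd (snd p) < tAB + t}"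
  have mB[measurable]: "B1 \<in> sets borel" "B2 \<in> sets borel" unfolding B1_def B2_def by measurable
  define X where "X = (\<lambda>l. PiE {..<L} (\<lambda>i. if i = l then B2 else UNIV))"
  have sX: "X l \<in> sets ?M" for l unfolding X_def M by (intro sets_PiM_I_finite) (auto simp: sets_locm)
  have sP: "PiE {..<L} (\<lambda>_. B1) \<in> sets ?M" unfolding M by (intro sets_PiM_I_finite) (auto simp: sets_locm)
  have sub: "{g \<in> space ?M. glass_fails L g} \<subseteq> PiE {..<L} (\<lambda>_. B1) \<union> (\<Union>l\<in>{..<L}. X l)"
  proof
    fix g assume g: "g \<in> {g \<in> space ?M. glass_fails L g}"
    then have ge: "g \<in> PiE {..<L} (\<lambda>_. UNIV)" by simp
    show "g \<in> PiE {..<L} (\<lambda>_. B1) \<union> (\<Union>l\<in>{..<L}. X l)"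
    proof (cases "\<exists>l<L. g l \<in> B2")
      case True
      then obtain l where "l < L" "g l \<in> B2" by auto
      then have "g \<in> X l" using ge unfolding X_def by (auto simp: PiE_def Pi_def)
      then show ?thesis using \<open>l < L\<close> by auto
    next
      case False
      have "g l \<in> B1" if "l < L" for l
      proof (rule ccontr)
        assume "g l \<notin> B1"
        then have "\<forall>l'<L. fst (g l) < fst (snd (g l')) \<and> fst (g l) < snd (snd (g l'))"
          using False unfolding B1_def B2_def by force
        then show False using g gf_char[OF L, of g] \<open>l < L\<close> by auto
      qed
      then have "g \<in> PiE {..<L} (\<lambda>_. B1)" using ge by (auto simp: PiE_def Pi_def)
      then show ?thesis by auto
    qed
  qed
  have "fail_prob tAB t L \<le> measure ?M (PiE {..<L} (\<lambda>_. B1) \<union> (\<Union>l\<in>{..<L}. X l))"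
    unfolding fail_prob_def M
    using sub sX sP unfolding M by (intro P.finite_measure_mono) auto
  also have "\<dots> \<le> measure ?M (PiE {..<L} (\<lambda>_. B1)) + measure ?M (\<Union>l\<in>{..<L}. X l)"
    using sX sP by (intro measure_Un_le) auto
  also have "measure ?M (\<Union>l\<in>{..<L}. X l) \<le> (\<Sum>l\<in>{..<L}. measure ?M (X l))"
    using sX unfolding M by (intro measure_subadditive_finite) auto
  also have "(\<Sum>l\<in>{..<L}. measure ?M (X l)) = 0"
  proof (intro sum.neutral ballI)
    fix l assume l: "l \<in> {..<L}"
    have "measure ?M (X l) = (\<Prod>i\<in>{..<L}. measure (locus_measure tAB t) (if i = l then B2 else UNIV))"
      unfolding M X_def by (rule P.prob_times) (auto simp: sets_locm)
    also have "\<dots> = 0" using l B2_def locm_B2[of tAB t] by (intro prod_zero) auto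
    finally show "measure ?M (X l) = 0" .
  qed
  also have "measure ?M (PiE {..<L} (\<lambda>_. B1)) = (\<Prod>i\<in>{..<L}. measure (locus_measure tAB t) B1)"
    unfolding M by (rule P.prob_times) (auto simp: sets_locm)
  also have "\<dots> \<le> exp (- t) ^ L"
    using locm_B1[OF t, of tAB] unfolding B1_def by (simp add: power_mono)
  finally show ?thesis by simp
qed

lemma fail_lower:
  assumes L: "0 < L" and t: "0 \<le> t" and a: "0 \<le> a"
  shows "exp (- t) * (1 - exp (- a * 3)) / 3 * (exp (- t) * exp (- a * 3)) ^ (L - 1) \<le> fail_prob tAB t L"
proof -
  interpret P: finite_product_prob_space "\<lambda>_. locus_measure tAB t" "{..<L}" by (rule fpps)
  let ?M = "loci_measure tAB t L"
  have M: "?M = PiM {..<L} (\<lambda>_. locus_measure tAB t)" unfolding loci_measure_def ..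
  define C0 where "C0 = {p::real\<times>real\<times>real. fst (snd p) \<le> tAB + t + a \<and> fst (snd p) \<le> fst p}"
  define C1 where "C1 = {p::real\<times>real\<times>real. tAB + t + a \<le> fst p}"
  have mC[measurable]: "C0 \<in> sets borel" "C1 \<in> sets borel" unfolding C0_def C1_def by measurable
  define Y where "Y = PiE {..<L} (\<lambda>i. if i = 0 then C0 else C1)"
  have sub: "Y \<subseteq> {g \<in> space ?M. glass_fails L g}"
  proof
    fix g assume g: "g \<in> Y"
    have "\<not> (\<exists>l<L. \<forall>l'<L. fst (g l) < fst (snd (g l')) \<and> fst (g l) < snd (snd (g l')))"
    proof
      assume "\<exists>l<L. \<forall>l'<L. fst (g l) < fst (snd (g l')) \<and> fst (g l) < snd (snd (g l'))"
      then obtain l where l: "l < L" "\<forall>l'<L. fst (g l) < fst (snd (g l')) \<and> fst (g l) < snd (snd (g l'))" by auto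
      have "g 0 \<in> C0" using PiE_mem[OF g[unfolded Y_def], of 0] L by simp
      have "fst (g l) < fst (snd (g 0))" using l L by auto
      show False
      proof (cases "l = 0")
        case True then show ?thesis using \<open>g 0 \<in> C0\<close> \<open>fst (g l) < fst (snd (g 0))\<close> unfolding C0_def by auto
      next
        case False
        then have "g l \<in> C1" using PiE_mem[OF g[unfolded Y_def], of l] l by simp
        then show ?thesis using \<open>g 0 \<in> C0\<close> \<open>fst (g l) < fst (snd (g 0))\<close> unfolding C0_def C1_def by auto
      qed
    qed
    then show "g \<in> {g \<in> space ?M. glass_fails L g}"
      using g gf_char[OF L, of g] unfolding Y_def by (auto simp: PiE_def Pi_def)
  qed
  have "measure ?M Y = (\<Prod>i\<in>{..<L}. measure (locus_measure tAB t) (if i = 0 then C0 else C1))"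
    unfolding M Y_def by (rule P.prob_times) (auto simp: sets_locm)
  also have "\<dots> = measure (locus_measure tAB t) C0 * measure (locus_measure tAB t) C1 ^ (L - 1)"
  proof -
    obtain n where n: "L = Suc n" using L by (cases L) auto
    have "(\<Prod>i\<in>{..<L}. measure (locus_measure tAB t) (if i = 0 then C0 else C1)) =
       measure (locus_measure tAB t) C0 * (\<Prod>i\<in>Suc ` {..<n}. measure (locus_measure tAB t) (if i = 0 then C0 else C1))"
      unfolding n lessThan_Suc_eq_insert_0 by (subst prod.insert) auto
    also have "(\<Prod>i\<in>Suc ` {..<n}. measure (locus_measure tAB t) (if i = 0 then C0 else C1)) = measure (locus_measure tAB t) C1 ^ n"
      by (subst prod.reindex) auto
    finally show ?thesis using n by simp
  qed
  also have "\<dots> \<ge> exp (- t) * (1 - exp (- a * 3)) / 3 * (exp (- t) * exp (- a * 3)) ^ (L - 1)"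
  proof (rule mult_mono)
    show "exp (- t) * (1 - exp (- a * 3)) / 3 \<le> measure (locus_measure tAB t) C0"
      using locm_C0[OF t a, of tAB] unfolding C0_def .
    show "(exp (- t) * exp (- a * 3)) ^ (L - 1) \<le> measure (locus_measure tAB t) C1 ^ (L - 1)"
      using locm_C1[OF t a, of tAB] unfolding C1_def by (intro power_mono) auto
  qed auto
  finally have "exp (- t) * (1 - exp (- a * 3)) / 3 * (exp (- t) * exp (- a * 3)) ^ (L - 1) \<le> measure ?M Y" .
  also have "measure ?M Y \<le> fail_prob tAB t L"
    unfolding fail_prob_def using sub fail_sets[OF L, of tAB t]
    unfolding M by (intro P.finite_measure_mono) auto
  finally show ?thesis .
qed




theorem mainTheorem1:
  fixes tAB t :: real
  assumes "tAB \<ge> 0" and "t \<ge> 0"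
  shows "((\<lambda>L. - ln (fail_prob tAB t L) / real L) \<longlongrightarrow> t) sequentially"
proof (rule LIMSEQ_I)
  fix r :: real assume r: "0 < r"
  define a where "a = r / 6"
  have a: "0 < a" using r by (simp add: a_def)
  define c0 where "c0 = exp (- t) * (1 - exp (- a * 3)) / 3"
  have "exp (- a * 3) < 1" using a by simp
  then have c0: "0 < c0" unfolding c0_def by simp
  define K where "K = \<bar>ln c0\<bar>"
  obtain N :: nat where N: "2 * K / r < real N" using reals_Archimedean2 by blast
  show "\<exists>no. \<forall>n\<ge>no. norm (- ln (fail_prob tAB t n) / real n - t) < r"
  proof (intro exI[of _ "max 1 N"] allI impI)
    fix n :: nat assume n: "max 1 N \<le> n"
    then have n0: "0 < n" and nN: "N \<le> n" by auto
    let ?f = "fail_prob tAB t n"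
    have lo: "c0 * (exp (- t) * exp (- a * 3)) ^ (n - 1) \<le> ?f"
      using fail_lower[OF n0 assms(2), of a tAB] a unfolding c0_def by simp
    have lo_pos: "0 < c0 * (exp (- t) * exp (- a * 3)) ^ (n - 1)" using c0 by simp
    have up: "?f \<le> exp (- t) ^ n" using fail_upper[OF n0 assms(2)] .
    have fpos: "0 < ?f" using lo lo_pos by linarith
    have "ln ?f \<le> ln (exp (- t) ^ n)" using up fpos by simp
    also have "\<dots> = - t * real n" by (simp add: ln_realpow)
    finally have l1: "ln ?f \<le> - t * real n" .
    have "ln (c0 * (exp (- t) * exp (- a * 3)) ^ (n - 1)) \<le> ln ?f" using lo lo_pos by simp
    moreover have "ln (c0 * (exp (- t) * exp (- a * 3)) ^ (n - 1)) = ln c0 + real (n - 1) * (- t - a * 3)"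
      using c0 by (simp add: ln_mult ln_realpow ln_exp)
    ultimately have l2: "ln c0 + real (n - 1) * (- t - a * 3) \<le> ln ?f" by simp
    have rn: "real (n - 1) = real n - 1" using n0 by simp
    have "- K - (t + a * 3) * real n \<le> ln c0 + real (n - 1) * (- t - a * 3)"
      unfolding rn K_def using a assms(2) by (auto simp: algebra_simps)
    with l2 have l3: "- ln ?f \<le> K + (t + a * 3) * real n" by linarith
    have npos: "0 < real n" using n0 by simp
    have g1: "t \<le> - ln ?f / real n" using l1 npos by (simp add: field_simps)
    have hK: "K / real n < r / 2"
    proof -
      have "2 * K / r < real n" using N nN by linarith
      then have "2 * K < r * real n" using r by (simp add: field_simps)
      then show ?thesis using npos by (simp add: field_simps)
    qed
    have "- ln ?f / real n \<le> (K + (t + a * 3) * real n) / real n"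
      using divide_right_mono[OF l3, of "real n"] npos by simp
    also have "\<dots> = K / real n + t + a * 3" using npos by (simp add: field_simps)
    also have "\<dots> < t + r" using hK unfolding a_def by linarith
    finally show "norm (- ln ?f / real n - t) < r" using g1 by simp
  qed
qed


end
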